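(* With the notation of the context, for every $r\in(0,1)$ and $v=(v_1,v_2)\in\mathbb{R}^2$, $$T^Q\big(\rho(r,0),\rho(r+v_1t,v_2t)\big)=G(r,v)\,t^2+O(t^3)\quad\text{as }t\downarrow0,$$ where $$G(r,v)=\max_{\phi\in[0,2\pi)}\frac{\big(2v_1\cos\phi-(2r-1)v_2\sin\phi\big)^2}{16\big(1+(2r-1)\cos\phi\big)}.$$
   Context: For $r\in[0,1]$ and $\theta\in\mathbb{R}$, $\rho(r,\theta)=\tfrac12[\mathbb{1}+(2r-1)(\sigma_1\sin\theta+\sigma_3\cos\theta)]$, with $\sigma_i$ the Pauli matrices. Let $C^Q=\tfrac12(\mathbb{1}-S)$ with $S$ the swap on $\mathbb{C}^2\otimes\mathbb{C}^2$. Define $T^Q(\rho^A,\rho^B)=\min\operatorname{Tr}(C^Q\rho^{AB})$, the minimum taken over density matrices $\rho^{AB}$ on $\mathbb{C}^2\otimes\mathbb{C}^2$ with marginals $\operatorname{Tr}_B\rho^{AB}=\rho^A$ and $\operatorname{Tr}_A\rho^{AB}=\rho^B$. Known formula (assumed): $T^Q(\rho(s,0),\rho(r,\theta))=\max_{\phi\in[0,2\pi)}\tfrac14\big(\sqrt{1+(2s-1)\cos\phi}-\sqrt{1+(2r-1)\cos(\theta+\phi)}\big)^2$. *)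

theory Defs
  imports Complex_Main "HOL-Library.Landau_Symbols" "Jordan_Normal_Form.Matrix"
begin

definition pauli1 :: "complex mat" where
  "pauli1 = mat 2 2 (\<lambda>(i,j). if i \<noteq> j then 1 else 0)"

definition pauli3 :: "complex mat" where
  "pauli3 = mat 2 2 (\<lambda>(i,j). if i = j then (if i = 0 then 1 else -1) else 0)"

definition qubit :: "real \<Rightarrow> real \<Rightarrow> complex mat" where
  "qubit r \<theta> = (1/2 :: complex) \<cdot>\<^sub>m (1\<^sub>m 2 + complex_of_real (2*r - 1) \<cdot>\<^sub>m
      (complex_of_real (sin \<theta>) \<cdot>\<^sub>m pauli1 + complex_of_real (cos \<theta>) \<cdot>\<^sub>m pauli3))"

text \<open>C^2 tensor C^2 with basis |a b> at index 2*a + b (a, b in {0,1}).\<close>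
definition swap_op :: "complex mat" where
  "swap_op = mat 4 4 (\<lambda>(i,j). if i div 2 = j mod 2 \<and> i mod 2 = j div 2 then 1 else 0)"

definition cost_Q :: "complex mat" where
  "cost_Q = (1/2 :: complex) \<cdot>\<^sub>m (1\<^sub>m 4 - swap_op)"

definition ptrace_B :: "complex mat \<Rightarrow> complex mat" where
  "ptrace_B M = mat 2 2 (\<lambda>(a,c). \<Sum>b<2. M $$ (2*a + b, 2*c + b))"

definition ptrace_A :: "complex mat \<Rightarrow> complex mat" where
  "ptrace_A M = mat 2 2 (\<lambda>(b,d). \<Sum>a<2. M $$ (2*a + b, 2*a + d))"

definition mtrace :: "complex mat \<Rightarrow> complex" where
  "mtrace M = (\<Sum>i<dim_row M. M $$ (i,i))"

definition density_mat :: "nat \<Rightarrow> complex mat \<Rightarrow> bool" where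
  "density_mat n M \<longleftrightarrow> M \<in> carrier_mat n n \<and> mtrace M = 1 \<and>
     (\<forall>v :: nat \<Rightarrow> complex. let q = (\<Sum>i<n. \<Sum>j<n. cnj (v i) * M $$ (i,j) * v j)
        in Im q = 0 \<and> Re q \<ge> 0)"

text \<open>Quantum optimal transport cost T^Q (the minimum exists by compactness; Inf is used).\<close>
definition TQ :: "complex mat \<Rightarrow> complex mat \<Rightarrow> real" where
  "TQ \<rho>A \<rho>B = Inf {Re (mtrace (cost_Q * \<rho>AB)) | \<rho>AB.
      density_mat 4 \<rho>AB \<and> ptrace_B \<rho>AB = \<rho>A \<and> ptrace_A \<rho>AB = \<rho>B}"

definition G_coef :: "real \<Rightarrow> real \<times> real \<Rightarrow> real" where
  "G_coef r v = (SUP \<phi>\<in>{0..<2*pi}.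
      (2 * fst v * cos \<phi> - (2*r - 1) * snd v * sin \<phi>)^2 / (16 * (1 + (2*r - 1) * cos \<phi>)))"

end

theory Submission imports Defs begin
lemma cos_diff_bound: "\<bar>cos (x::real) - 1\<bar> \<le> x^2/2"
proof -
  have "cos x = cos (2*(x/2))" by simp
  also have "\<dots> = 1 - 2 * (sin (x/2))^2" by (rule cos_double_sin)
  finally have e: "cos x - 1 = - 2 * (sin (x/2))^2" by simp
  have "\<bar>sin (x/2)\<bar> \<le> \<bar>x/2\<bar>" by (rule abs_sin_x_le_abs_x)
  hence "(sin (x/2))^2 \<le> (x/2)^2"
    by (metis abs_ge_zero power2_abs power_mono)
  thus ?thesis using e by (simp add: power_divide)
qed
lemma sin_diff_bound: "\<bar>sin (x::real) - x\<bar> \<le> x^2/2"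
proof -
  have "\<bar>sin x - (\<Sum>m<2. sin_coeff m * x ^ m)\<bar> \<le> inverse (fact 2) * \<bar>x\<bar> ^ 2"
    by (rule Maclaurin_sin_bound)
  thus ?thesis by (simp add: sin_coeff_def numeral_2_eq_2)
qed
lemma sup_approx:
  fixes f g :: "real \<Rightarrow> real"
  assumes ne: "A \<noteq> {}" and close: "\<And>x. x\<in>A \<Longrightarrow> \<bar>f x - c * g x\<bar> \<le> e"
    and bdd: "bdd_above (g`A)" and c: "c > 0"
  shows "\<bar>(SUP x\<in>A. f x) - c * (SUP x\<in>A. g x)\<bar> \<le> e"
proof -
  have gu: "g x \<le> (SUP x\<in>A. g x)" if "x\<in>A" for x using bdd that by (rule cSUP_upper2) simp
  have fu: "f x \<le> c * (SUP x\<in>A. g x) + e" if "x\<in>A" for x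
  proof -
    have "c * g x \<le> c * (SUP x\<in>A. g x)" using gu[OF that] c by simp
    thus ?thesis using close[OF that] by linarith
  qed
  hence bf: "bdd_above (f`A)" by (meson bdd_aboveI2)
  have 1: "(SUP x\<in>A. f x) \<le> c * (SUP x\<in>A. g x) + e" using ne fu by (rule cSUP_least)
  have "g x \<le> ((SUP x\<in>A. f x) + e) / c" if "x\<in>A" for x
  proof -
    have "f x \<le> (SUP x\<in>A. f x)" using bf that by (rule cSUP_upper2) simp
    hence "c * g x \<le> (SUP x\<in>A. f x) + e" using close[OF that] by linarith
    thus ?thesis using c by (simp add: field_simps)
  qed
  hence "(SUP x\<in>A. g x) \<le> ((SUP x\<in>A. f x) + e) / c" using ne by (intro cSUP_least) auto
  hence "c * (SUP x\<in>A. g x) \<le> (SUP x\<in>A. f x) + e" using c by (simp add: field_simps)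
  thus ?thesis using 1 by linarith
qed
lemma core:
  fixes S1 S2 D L m t K1 K2 A :: real
  assumes m: "m > 0" "S1 \<ge> m" and S2: "S2 \<ge> 0" and DS: "S2^2 - S1^2 = D"
    and b1: "\<bar>D - L\<bar> \<le> K1 * t^2" and b2: "\<bar>D\<bar> \<le> K2 * t" and b3: "\<bar>L\<bar> \<le> A * t"
    and t: "t \<ge> 0"
  shows "\<bar>(S1 - S2)^2/4 - (L/(2*S1))^2/4\<bar>
           \<le> ((K1/m + A*K2/(2*m^3)) * (K2/m + A/(2*m))/4) * t^3"
proof -
  have S1p: "S1 > 0" using m by linarith
  have Sp: "S1 + S2 \<ge> m" using m S2 by linarith
  have Spp: "S1 + S2 > 0" using m S2 by linarith
  define X where "X = D/(S1+S2)"
  define Y where "Y = L/(2*S1)"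
  have "(S2 - S1) * (S1 + S2) = D" using DS by (simp add: power2_eq_square algebra_simps)
  hence SX: "S2 - S1 = X" unfolding X_def using Spp by (simp add: field_simps)
  have ax: "\<bar>X\<bar> \<le> K2*t/m"
  proof -
    have "\<bar>X\<bar> = \<bar>D\<bar>/(S1+S2)" unfolding X_def using Spp by simp
    also have "\<dots> \<le> \<bar>D\<bar>/m" using Sp m by (intro divide_left_mono) auto
    also have "\<dots> \<le> K2*t/m" using b2 m by (intro divide_right_mono) auto
    finally show ?thesis .
  qed
  have ay: "\<bar>Y\<bar> \<le> A*t/(2*m)"
  proof -
    have "\<bar>Y\<bar> = \<bar>L\<bar>/(2*S1)" unfolding Y_def using S1p by simp
    also have "\<dots> \<le> \<bar>L\<bar>/(2*m)" using m by (intro divide_left_mono) auto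
    also have "\<dots> \<le> A*t/(2*m)" using b3 m by (intro divide_right_mono) auto
    finally show ?thesis .
  qed
  have XY: "X - Y = (D - L)/(S1+S2) + Y * (S1 - S2)/(S1+S2)"
  proof -
    have L: "L = 2*S1*Y" unfolding Y_def using S1p by simp
    define S where "S = S1 + S2"
    have S0: "S \<noteq> 0" using Spp S_def by simp
    have "X * S = D" unfolding X_def S_def[symmetric] using S0 by simp
    hence "(X - Y) * S = (D - L) + Y * (S1 - S2)" unfolding L S_def by (simp add: algebra_simps)
    hence "X - Y = ((D - L) + Y * (S1 - S2)) / S" using S0 by (simp add: eq_divide_eq)
    thus ?thesis unfolding S_def by (simp add: add_divide_distrib)
  qed
  have e1: "\<bar>(D - L)/(S1+S2)\<bar> \<le> K1*t^2/m"
  proof -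
    have "\<bar>(D - L)/(S1+S2)\<bar> = \<bar>D-L\<bar>/(S1+S2)" using Spp by simp
    also have "\<dots> \<le> \<bar>D-L\<bar>/m" using Sp m by (intro divide_left_mono) auto
    also have "\<dots> \<le> K1*t^2/m" using b1 m by (intro divide_right_mono) auto
    finally show ?thesis .
  qed
  have e2: "\<bar>Y * (S1 - S2)/(S1+S2)\<bar> \<le> (A*t/(2*m)) * (K2*t/m) / m"
  proof -
    have "\<bar>Y * (S1 - S2)/(S1+S2)\<bar> = \<bar>Y\<bar> * \<bar>X\<bar>/(S1+S2)" using Spp SX abs_minus_commute[of S1 S2]
      by (simp add: abs_mult)
    also have "\<dots> \<le> \<bar>Y\<bar> * \<bar>X\<bar>/m" using Sp m by (intro divide_left_mono) auto
    also have "\<dots> \<le> (A*t/(2*m)) * (K2*t/m) / m" using ax ay m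
      by (intro divide_right_mono mult_mono) auto
    finally show ?thesis .
  qed
  have dxy: "\<bar>X - Y\<bar> \<le> (K1/m + A*K2/(2*m^3)) * t^2"
  proof -
    have "\<bar>X - Y\<bar> \<le> K1*t^2/m + (A*t/(2*m)) * (K2*t/m) / m" using XY e1 e2 abs_triangle_ineq[of "(D-L)/(S1+S2)" "Y*(S1-S2)/(S1+S2)"] by simp
    also have "\<dots> = (K1/m + A*K2/(2*m^3)) * t^2" using m by (simp add: field_simps power2_eq_square power3_eq_cube)
    finally show ?thesis .
  qed
  have sxy: "\<bar>X + Y\<bar> \<le> (K2/m + A/(2*m)) * t"
  proof -
    have "\<bar>X + Y\<bar> \<le> K2*t/m + A*t/(2*m)" using ax ay abs_triangle_ineq[of X Y] by simp
    also have "\<dots> = (K2/m + A/(2*m)) * t" by (simp add: field_simps)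
    finally show ?thesis .
  qed
  have "(S1 - S2)^2/4 - (L/(2*S1))^2/4 = (X - Y) * (X + Y) / 4"
  proof -
    have "(S1 - S2)^2 = X^2" using SX power2_commute[of S1 S2] by simp
    thus ?thesis unfolding Y_def[symmetric] by (simp add: power2_eq_square algebra_simps)
  qed
  hence "\<bar>(S1 - S2)^2/4 - (L/(2*S1))^2/4\<bar> = \<bar>(X - Y) * (X + Y) / 4\<bar>" by (simp only:)
  also have "\<dots> = \<bar>X - Y\<bar> * \<bar>X + Y\<bar> / 4" by (simp add: abs_mult)
  also have "\<dots> \<le> ((K1/m + A*K2/(2*m^3)) * t^2) * ((K2/m + A/(2*m)) * t) / 4"
    using dxy sxy by (intro divide_right_mono mult_mono) auto
  also have "\<dots> = ((K1/m + A*K2/(2*m^3)) * (K2/m + A/(2*m))/4) * t^3"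
    by (simp add: power2_eq_square power3_eq_cube)
  finally show ?thesis .
qed
lemma pointwise:
  fixes r v1 v2 t \<phi> :: real
  assumes r: "0 < r" "r < 1" and t: "0 \<le> t" "t \<le> 1"
    and r': "0 \<le> r + v1*t" "r + v1*t \<le> 1"
  defines "a \<equiv> 2*r - 1"
  defines "m \<equiv> sqrt (1 - \<bar>a\<bar>)"
  defines "A \<equiv> 2*\<bar>v1\<bar> + \<bar>v2\<bar>"
  defines "K1 \<equiv> v2^2 + \<bar>v1\<bar>*v2^2 + 2*\<bar>v1\<bar>*\<bar>v2\<bar>"
  shows "\<bar>(1/4) * (sqrt (1 + (2*r - 1) * cos \<phi>) - sqrt (1 + (2*(r + v1*t) - 1) * cos (v2*t + \<phi>)))^2
          - (2 * v1 * cos \<phi> - (2*r - 1) * v2 * sin \<phi>)^2 / (16 * (1 + (2*r - 1) * cos \<phi>)) * t^2\<bar>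
         \<le> ((K1/m + A*(K1+A)/(2*m^3)) * ((K1+A)/m + A/(2*m))/4) * t^3"
proof -
  define b where "b = 2*(r + v1*t) - 1"
  define \<theta> where "\<theta> = v2*t"
  define S1 where "S1 = sqrt (1 + a * cos \<phi>)"
  define S2 where "S2 = sqrt (1 + b * cos (\<theta> + \<phi>))"
  define D where "D = b * cos (\<theta> + \<phi>) - a * cos \<phi>"
  define L where "L = t * (2 * v1 * cos \<phi> - a * v2 * sin \<phi>)"
  have a1: "\<bar>a\<bar> < 1" using r unfolding a_def by auto
  have b1: "\<bar>b\<bar> \<le> 1" using r' unfolding b_def by auto
  have m0: "m > 0" unfolding m_def using a1 by simp
  have ac: "\<bar>a * cos \<phi>\<bar> \<le> \<bar>a\<bar>" using abs_cos_le_one[of \<phi>] by (simp add: abs_mult mult_left_le)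
  have bc: "\<bar>b * cos (\<theta> + \<phi>)\<bar> \<le> 1" using abs_cos_le_one[of "\<theta>+\<phi>"] b1
    by (simp add: abs_mult mult_le_one)
  have pos1: "1 + a * cos \<phi> \<ge> 1 - \<bar>a\<bar>" using ac by linarith
  have pos1': "1 + a * cos \<phi> > 0" using pos1 a1 by linarith
  have pos2: "1 + b * cos (\<theta> + \<phi>) \<ge> 0" using bc by linarith
  have S1m: "S1 \<ge> m" unfolding S1_def m_def using pos1 by simp
  have S2: "S2 \<ge> 0" unfolding S2_def using pos2 by simp
  have DS: "S2^2 - S1^2 = D" unfolding S1_def S2_def D_def
    using real_sqrt_pow2[OF pos2] real_sqrt_pow2[OF less_imp_le[OF pos1']] by simp
  have cb: "\<bar>cos \<theta> - 1\<bar> \<le> \<theta>^2/2" by (rule cos_diff_bound)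
  have sb: "\<bar>sin \<theta> - \<theta>\<bar> \<le> \<theta>^2/2" by (rule sin_diff_bound)
  have sa: "\<bar>sin \<theta>\<bar> \<le> \<bar>\<theta>\<bar>" by (rule abs_sin_x_le_abs_x)
  have ca: "cos (\<theta> + \<phi>) = cos \<theta> * cos \<phi> - sin \<theta> * sin \<phi>" by (simp add: cos_add)
  have e1: "\<bar>cos (\<theta> + \<phi>) - cos \<phi> + \<theta> * sin \<phi>\<bar> \<le> \<theta>^2"
  proof -
    have "cos (\<theta> + \<phi>) - cos \<phi> + \<theta> * sin \<phi> = cos \<phi> * (cos \<theta> - 1) - sin \<phi> * (sin \<theta> - \<theta>)"
      unfolding ca by (simp add: algebra_simps)
    also have "\<bar>\<dots>\<bar> \<le> \<bar>cos \<phi> * (cos \<theta> - 1)\<bar> + \<bar>sin \<phi> * (sin \<theta> - \<theta>)\<bar>" by (rule abs_triangle_ineq4)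
    also have "\<dots> \<le> 1 * (\<theta>^2/2) + 1 * (\<theta>^2/2)" unfolding abs_mult
      by (intro add_mono mult_mono) (use cb sb in auto)
    finally show ?thesis by simp
  qed
  have e2: "\<bar>cos (\<theta> + \<phi>) - cos \<phi>\<bar> \<le> \<theta>^2/2 + \<bar>\<theta>\<bar>"
  proof -
    have "cos (\<theta> + \<phi>) - cos \<phi> = cos \<phi> * (cos \<theta> - 1) - sin \<phi> * sin \<theta>"
      unfolding ca by (simp add: algebra_simps)
    also have "\<bar>\<dots>\<bar> \<le> \<bar>cos \<phi> * (cos \<theta> - 1)\<bar> + \<bar>sin \<phi> * sin \<theta>\<bar>" by (rule abs_triangle_ineq4)
    also have "\<dots> \<le> 1 * (\<theta>^2/2) + 1 * \<bar>\<theta>\<bar>" unfolding abs_mult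
      by (intro add_mono mult_mono) (use cb sa in auto)
    finally show ?thesis by simp
  qed
  have DL: "D - L = a * (cos (\<theta> + \<phi>) - cos \<phi> + \<theta> * sin \<phi>) + 2 * v1 * t * (cos (\<theta> + \<phi>) - cos \<phi>)"
    unfolding D_def L_def b_def \<theta>_def a_def by (simp add: algebra_simps)
  have t3: "t^3 \<le> t^2" using t by (simp add: power_decreasing)
  have bDL: "\<bar>D - L\<bar> \<le> K1 * t^2"
  proof -
    have "\<bar>D - L\<bar> \<le> \<bar>a\<bar> * \<bar>cos (\<theta> + \<phi>) - cos \<phi> + \<theta> * sin \<phi>\<bar> + 2 * \<bar>v1\<bar> * t * \<bar>cos (\<theta> + \<phi>) - cos \<phi>\<bar>"
      unfolding DL using t abs_triangle_ineq[of "a * (cos (\<theta> + \<phi>) - cos \<phi> + \<theta> * sin \<phi>)" "2 * v1 * t * (cos (\<theta> + \<phi>) - cos \<phi>)"]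
      by (simp add: abs_mult)
    also have "\<dots> \<le> 1 * \<theta>^2 + 2 * \<bar>v1\<bar> * t * (\<theta>^2/2 + \<bar>\<theta>\<bar>)"
      using e1 e2 a1 t by (intro add_mono mult_mono) auto
    also have "\<dots> = v2^2 * t^2 + \<bar>v1\<bar> * v2^2 * t^3 + 2*\<bar>v1\<bar>*\<bar>v2\<bar> * t^2"
      unfolding \<theta>_def using t by (simp add: power2_eq_square power3_eq_cube abs_mult algebra_simps)
    also have "\<dots> \<le> v2^2 * t^2 + \<bar>v1\<bar> * v2^2 * t^2 + 2*\<bar>v1\<bar>*\<bar>v2\<bar> * t^2"
      using t3 by (simp add: mult_left_mono)
    also have "\<dots> = K1 * t^2" unfolding K1_def by (simp add: algebra_simps)
    finally show ?thesis .
  qed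
  have bL: "\<bar>L\<bar> \<le> A * t"
  proof -
    have "\<bar>L\<bar> \<le> t * (\<bar>2 * v1 * cos \<phi>\<bar> + \<bar>a * v2 * sin \<phi>\<bar>)"
      unfolding L_def using t abs_triangle_ineq4[of "2 * v1 * cos \<phi>" "a * v2 * sin \<phi>"]
      by (simp add: abs_mult mult_left_mono)
    also have "\<dots> \<le> t * (2*\<bar>v1\<bar> * 1 + (1 * \<bar>v2\<bar>) * 1)" unfolding abs_mult using t a1
      by (intro mult_left_mono add_mono mult_mono) auto
    finally show ?thesis unfolding A_def by (simp add: algebra_simps)
  qed
  have bD: "\<bar>D\<bar> \<le> (K1 + A) * t"
  proof -
    have "\<bar>D\<bar> \<le> \<bar>D - L\<bar> + \<bar>L\<bar>" by linarith
    also have "\<dots> \<le> K1 * t^2 + A * t" using bDL bL by linarith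
    also have "\<dots> \<le> K1 * t + A * t"
    proof -
      have "K1 \<ge> 0" unfolding K1_def by simp
      moreover have "t^2 \<le> t" using t by (simp add: power2_eq_square mult_left_le)
      ultimately show ?thesis by (simp add: mult_left_mono)
    qed
    finally show ?thesis by (simp add: algebra_simps)
  qed
  have main: "\<bar>(S1 - S2)^2/4 - (L/(2*S1))^2/4\<bar>
           \<le> ((K1/m + A*(K1+A)/(2*m^3)) * ((K1+A)/m + A/(2*m))/4) * t^3"
    by (rule core[OF m0 S1m S2 DS bDL bD bL t(1)])
  have eq1: "(1/4) * (sqrt (1 + (2*r - 1) * cos \<phi>) - sqrt (1 + (2*(r + v1*t) - 1) * cos (v2*t + \<phi>)))^2
     = (S1 - S2)^2/4" unfolding S1_def S2_def a_def b_def \<theta>_def by simp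
  have S1sq: "S1^2 = 1 + a * cos \<phi>" unfolding S1_def using real_sqrt_pow2[OF less_imp_le[OF pos1']] .
  have eq2: "(2 * v1 * cos \<phi> - (2*r - 1) * v2 * sin \<phi>)^2 / (16 * (1 + (2*r - 1) * cos \<phi>)) * t^2
     = (L/(2*S1))^2/4"
  proof -
    have "(L/(2*S1))^2/4 = L^2 / (16 * S1^2)" by (simp add: power_divide power_mult_distrib)
    also have "\<dots> = L^2 / (16 * (1 + a * cos \<phi>))" unfolding S1sq ..
    also have "L^2 = (2 * v1 * cos \<phi> - (2*r - 1) * v2 * sin \<phi>)^2 * t^2"
      unfolding L_def a_def by (simp add: power_mult_distrib)
    also have "(2 * v1 * cos \<phi> - (2*r - 1) * v2 * sin \<phi>)^2 * t^2 / (16 * (1 + a * cos \<phi>))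
      = (2 * v1 * cos \<phi> - (2*r - 1) * v2 * sin \<phi>)^2 / (16 * (1 + a * cos \<phi>)) * t^2" by simp
    finally have h: "(L/(2*S1))^2/4 = (2 * v1 * cos \<phi> - (2*r - 1) * v2 * sin \<phi>)^2 / (16 * (1 + a * cos \<phi>)) * t^2" .
    from h show ?thesis unfolding a_def by (rule sym)
  qed
  show ?thesis using main unfolding eq1 eq2 .
qed
theorem lemmaA1:
  fixes r :: real and v :: "real \<times> real"
  assumes known_formula: "\<And>s r' \<theta>. s \<in> {0..1} \<Longrightarrow> r' \<in> {0..1} \<Longrightarrow>
      TQ (qubit s 0) (qubit r' \<theta>) =
        (SUP \<phi>\<in>{0..<2*pi}. (1/4) * (sqrt (1 + (2*s - 1) * cos \<phi>)
                                   - sqrt (1 + (2*r' - 1) * cos (\<theta> + \<phi>)))^2)"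
    and r: "r \<in> {0<..<1}"
  shows "(\<lambda>t. TQ (qubit r 0) (qubit (r + fst v * t) (snd v * t)) - G_coef r v * t^2)
           \<in> O[at_right 0](\<lambda>t. t^3)"
proof -
  obtain v1 v2 where v: "v = (v1, v2)" by (cases v)
  have r0: "0 < r" "r < 1" using r by auto
  define a where "a = 2*r - 1"
  define m where "m = sqrt (1 - \<bar>a\<bar>)"
  define A where "A = 2*\<bar>v1\<bar> + \<bar>v2\<bar>"
  define K1 where "K1 = v2^2 + \<bar>v1\<bar>*v2^2 + 2*\<bar>v1\<bar>*\<bar>v2\<bar>"
  define C where "C = ((K1/m + A*(K1+A)/(2*m^3)) * ((K1+A)/m + A/(2*m))/4)"
  define g where "g = (\<lambda>\<phi>. (2 * v1 * cos \<phi> - (2*r - 1) * v2 * sin \<phi>)^2 / (16 * (1 + (2*r - 1) * cos \<phi>)))"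
  have a1: "\<bar>a\<bar> < 1" using r0 unfolding a_def by auto
  have gb: "g \<phi> \<le> A^2 / (16 * (1 - \<bar>a\<bar>))" for \<phi>
  proof -
    have ac: "\<bar>a * cos \<phi>\<bar> \<le> \<bar>a\<bar>" using abs_cos_le_one[of \<phi>] by (simp add: abs_mult mult_left_le)
    have "1 + a * cos \<phi> \<ge> 1 - \<bar>a\<bar>" using ac by linarith
    hence den: "16 * (1 + a * cos \<phi>) \<ge> 16 * (1 - \<bar>a\<bar>)" by simp
    have dp: "16 * (1 - \<bar>a\<bar>) > 0" using a1 by simp
    have Q: "\<bar>2 * v1 * cos \<phi> - a * v2 * sin \<phi>\<bar> \<le> A"
    proof -
      have "\<bar>2 * v1 * cos \<phi> - a * v2 * sin \<phi>\<bar> \<le> \<bar>2 * v1 * cos \<phi>\<bar> + \<bar>a * v2 * sin \<phi>\<bar>"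
        by (rule abs_triangle_ineq4)
      also have "\<dots> \<le> 2*\<bar>v1\<bar> * 1 + (1 * \<bar>v2\<bar>) * 1" unfolding abs_mult using a1
        by (intro add_mono mult_mono) auto
      finally show ?thesis unfolding A_def by simp
    qed
    hence Q2: "(2 * v1 * cos \<phi> - a * v2 * sin \<phi>)^2 \<le> A^2"
      by (metis abs_ge_zero power2_abs power_mono)
    have "g \<phi> = (2 * v1 * cos \<phi> - a * v2 * sin \<phi>)^2 / (16 * (1 + a * cos \<phi>))"
      unfolding g_def a_def ..
    also have "\<dots> \<le> A^2 / (16 * (1 + a * cos \<phi>))"
      using Q2 den dp by (intro divide_right_mono) auto
    also have "\<dots> \<le> A^2 / (16 * (1 - \<bar>a\<bar>))"
      using den dp by (intro divide_left_mono) auto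
    finally show ?thesis .
  qed
  hence bdd: "bdd_above (g ` {0..<2*pi})" by (meson bdd_aboveI2)
  have G: "G_coef r v = (SUP \<phi>\<in>{0..<2*pi}. g \<phi>)" unfolding G_coef_def g_def v by simp
  define \<delta> where "\<delta> = min 1 (min r (1-r) / (\<bar>v1\<bar> + 1))"
  have \<delta>0: "\<delta> > 0" unfolding \<delta>_def using r0 by simp
  have ev: "eventually (\<lambda>t. norm (TQ (qubit r 0) (qubit (r + fst v * t) (snd v * t)) - G_coef r v * t^2)
              \<le> C * norm (t^3)) (at_right (0::real))"
    unfolding eventually_at_right_field
  proof (intro exI[of _ \<delta>] conjI allI impI)
    show "\<delta> > 0" by (rule \<delta>0)
    fix t :: real assume t0: "t > 0" and t\<delta>: "t < \<delta>"
    have d1: "\<delta> \<le> 1" "\<delta> \<le> min r (1-r) / (\<bar>v1\<bar> + 1)" unfolding \<delta>_def by simp_all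
    have t1: "t \<le> 1" using t\<delta> d1 by linarith
    have "t * (\<bar>v1\<bar> + 1) < min r (1-r)"
      proof -
      have p: "\<bar>v1\<bar> + 1 > 0" by simp
      have "t < min r (1-r) / (\<bar>v1\<bar> + 1)" using t\<delta> d1(2) by linarith
      thus ?thesis using p by (simp only: less_divide_eq)
    qed
    moreover have "\<bar>v1 * t\<bar> \<le> t * (\<bar>v1\<bar> + 1)" using t0 by (simp add: abs_mult algebra_simps)
    ultimately have vt: "\<bar>v1 * t\<bar> < min r (1-r)" by linarith
    have r1: "0 \<le> r + v1*t" "r + v1*t \<le> 1" using vt by auto
    have TQe: "TQ (qubit r 0) (qubit (r + fst v * t) (snd v * t)) =
       (SUP \<phi>\<in>{0..<2*pi}. (1/4) * (sqrt (1 + (2*r - 1) * cos \<phi>)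
                                   - sqrt (1 + (2*(r + v1*t) - 1) * cos (v2*t + \<phi>)))^2)"
      unfolding v using known_formula r0 r1 by simp
    have "\<bar>(SUP \<phi>\<in>{0..<2*pi}. (1/4) * (sqrt (1 + (2*r - 1) * cos \<phi>)
                                   - sqrt (1 + (2*(r + v1*t) - 1) * cos (v2*t + \<phi>)))^2)
          - t^2 * (SUP \<phi>\<in>{0..<2*pi}. g \<phi>)\<bar> \<le> C * t^3"
    proof (rule sup_approx)
      show "{0..<2*pi} \<noteq> {}" by simp
      show "bdd_above (g ` {0..<2*pi})" by (rule bdd)
      show "t^2 > 0" using t0 by simp
      fix \<phi> :: real
      have "\<bar>(1/4) * (sqrt (1 + (2*r - 1) * cos \<phi>) - sqrt (1 + (2*(r + v1*t) - 1) * cos (v2*t + \<phi>)))^2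
          - g \<phi> * t^2\<bar> \<le> C * t^3"
        unfolding g_def C_def K1_def A_def m_def a_def
        by (rule pointwise[OF r0 less_imp_le[OF t0] t1 r1])
      thus "\<bar>(1/4) * (sqrt (1 + (2*r - 1) * cos \<phi>) - sqrt (1 + (2*(r + v1*t) - 1) * cos (v2*t + \<phi>)))^2
          - t^2 * g \<phi>\<bar> \<le> C * t^3" by (simp add: mult.commute)
    qed
    thus "norm (TQ (qubit r 0) (qubit (r + fst v * t) (snd v * t)) - G_coef r v * t^2) \<le> C * norm (t^3)"
      unfolding TQe G using t0 by (simp add: mult.commute)
  qed
  show ?thesis by (rule bigoI[OF ev])
qed
end
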